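(* Let $G\in\mathcal{G}_{2n}$ with $F(G)=n-1$. Then $G\in\mathcal{K}^+_{n,n}$ if and only if $G$ contains an independent set of size $n$. If $G\notin\mathcal{K}^+_{n,n}$, then $G$ is a brick, and hence $G$ is $1$-extendable.
   Context: All graphs are finite and simple. $\mathcal{G}_{2n}$ denotes the set of all graphs with $2n$ vertices that have a perfect matching. For a perfect matching $M$ of $G$, a forcing set of $M$ is a subset $S\subseteq M$ contained in no other perfect matching of $G$; $f(G,M)$ is the minimum size of a forcing set of $M$, and $F(G)$ is the maximum of $f(G,M)$ over all perfect matchings $M$. $\mathcal{K}^+_{n,n}$ is the family of graphs obtained from the complete bipartite graph $K_{n,n}$ by adding arbitrary (possibly no) additional edges whose both ends lie in the same one of the two partite sets (all added edges within one fixed partite set). A graph is bicritical if it has an edge and $G-u-v$ has a perfect matching for every pair of distinct vertices $u,v$; a brick is a $3$-connected bicritical graph. A connected graph with at least $2l+2$ vertices is $l$-extendable if it has a perfect matching and every matching of size $l$ is contained in a perfect matching. *)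

theory Defs
  imports Main
begin

definition simple_graph :: "'a set \<Rightarrow> 'a set set \<Rightarrow> bool" where
  "simple_graph V E \<longleftrightarrow> finite V \<and>
     (\<forall>e\<in>E. \<exists>u v. u \<in> V \<and> v \<in> V \<and> u \<noteq> v \<and> e = {u, v})"

definition matching :: "'a set set \<Rightarrow> 'a set set \<Rightarrow> bool" where
  "matching E M \<longleftrightarrow> M \<subseteq> E \<and> (\<forall>e1\<in>M. \<forall>e2\<in>M. e1 \<noteq> e2 \<longrightarrow> e1 \<inter> e2 = {})"

definition perfect_matching :: "'a set \<Rightarrow> 'a set set \<Rightarrow> 'a set set \<Rightarrow> bool" where
  "perfect_matching V E M \<longleftrightarrow> matching E M \<and> \<Union>M = V"

definition has_perfect_matching :: "'a set \<Rightarrow> 'a set set \<Rightarrow> bool" where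
  "has_perfect_matching V E \<longleftrightarrow> (\<exists>M. perfect_matching V E M)"

definition in_G2n :: "nat \<Rightarrow> 'a set \<Rightarrow> 'a set set \<Rightarrow> bool" where
  "in_G2n n V E \<longleftrightarrow> simple_graph V E \<and> card V = 2 * n \<and> has_perfect_matching V E"

definition forcing_set :: "'a set \<Rightarrow> 'a set set \<Rightarrow> 'a set set \<Rightarrow> 'a set set \<Rightarrow> bool" where
  "forcing_set V E M S \<longleftrightarrow> S \<subseteq> M \<and>
     (\<forall>M'. perfect_matching V E M' \<and> S \<subseteq> M' \<longrightarrow> M' = M)"

definition forcing_number :: "'a set \<Rightarrow> 'a set set \<Rightarrow> 'a set set \<Rightarrow> nat" where
  "forcing_number V E M = Min {card S | S. forcing_set V E M S}"

definition max_forcing_number :: "'a set \<Rightarrow> 'a set set \<Rightarrow> nat" where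
  "max_forcing_number V E = Max {forcing_number V E M | M. perfect_matching V E M}"

definition in_Kplus :: "nat \<Rightarrow> 'a set \<Rightarrow> 'a set set \<Rightarrow> bool" where
  "in_Kplus n V E \<longleftrightarrow> (\<exists>A B. A \<inter> B = {} \<and> A \<union> B = V \<and> card A = n \<and> card B = n \<and>
     (\<forall>a\<in>A. \<forall>b\<in>B. {a, b} \<in> E) \<and>
     (\<forall>e\<in>E. e \<subseteq> A \<or> (\<exists>a\<in>A. \<exists>b\<in>B. e = {a, b})))"

definition independent_set :: "'a set \<Rightarrow> 'a set set \<Rightarrow> 'a set \<Rightarrow> bool" where
  "independent_set V E I \<longleftrightarrow> I \<subseteq> V \<and> (\<forall>u\<in>I. \<forall>v\<in>I. {u, v} \<notin> E)"

definition del_edges :: "'a set set \<Rightarrow> 'a set \<Rightarrow> 'a set \<Rightarrow> 'a set set" where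
  "del_edges E V X = {e \<in> E. e \<subseteq> V - X}"

definition connected_graph :: "'a set \<Rightarrow> 'a set set \<Rightarrow> bool" where
  "connected_graph V E \<longleftrightarrow> V \<noteq> {} \<and>
     (\<forall>u\<in>V. \<forall>v\<in>V. (\<lambda>x y. {x, y} \<in> E)\<^sup>*\<^sup>* u v)"

definition k_connected :: "nat \<Rightarrow> 'a set \<Rightarrow> 'a set set \<Rightarrow> bool" where
  "k_connected k V E \<longleftrightarrow> card V > k \<and>
     (\<forall>X. X \<subseteq> V \<and> card X < k \<longrightarrow> connected_graph (V - X) (del_edges E V X))"

definition bicritical :: "'a set \<Rightarrow> 'a set set \<Rightarrow> bool" where
  "bicritical V E \<longleftrightarrow> E \<noteq> {} \<and>
     (\<forall>u\<in>V. \<forall>v\<in>V. u \<noteq> v \<longrightarrow>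
        has_perfect_matching (V - {u, v}) (del_edges E V {u, v}))"

definition brick :: "'a set \<Rightarrow> 'a set set \<Rightarrow> bool" where
  "brick V E \<longleftrightarrow> k_connected 3 V E \<and> bicritical V E"

definition extendable :: "nat \<Rightarrow> 'a set \<Rightarrow> 'a set set \<Rightarrow> bool" where
  "extendable l V E \<longleftrightarrow> connected_graph V E \<and> card V \<ge> 2 * l + 2 \<and>
     has_perfect_matching V E \<and>
     (\<forall>M. matching E M \<and> card M = l \<longrightarrow> (\<exists>P. perfect_matching V E P \<and> M \<subseteq> P))"

end

theory Submission
  imports Defs
begin


lemma edge_form:
  assumes "simple_graph V E" "e \<in> E"
  shows "\<exists>u v. u \<in> V \<and> v \<in> V \<and> u \<noteq> v \<and> e = {u, v}"
  using assms unfolding simple_graph_def by blast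

lemma single_notin:
  assumes "simple_graph V E" shows "{x} \<notin> E"
proof
  assume "{x} \<in> E"
  then obtain u v where "u \<noteq> v" "{x} = {u,v}" using edge_form[OF assms] by blast
  then show False by (metis insert_iff singletonD)
qed

lemma inv_pm:
  assumes "\<And>x. x \<in> U \<Longrightarrow> q x \<in> U \<and> q x \<noteq> x \<and> q (q x) = x \<and> {x, q x} \<in> E'"
  shows "perfect_matching U E' {{x, q x} | x. x \<in> U}"
  unfolding perfect_matching_def matching_def
proof (intro conjI)
  show "{{x, q x} | x. x \<in> U} \<subseteq> E'" using assms by auto
  show "\<forall>e1\<in>{{x, q x} |x. x \<in> U}. \<forall>e2\<in>{{x, q x} |x. x \<in> U}. e1 \<noteq> e2 \<longrightarrow> e1 \<inter> e2 = {}"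
  proof (intro ballI impI)
    fix e1 e2 assume h1: "e1 \<in> {{x, q x} |x. x \<in> U}" and h2: "e2 \<in> {{x, q x} |x. x \<in> U}" and ne: "e1 \<noteq> e2"
    obtain x where x: "x \<in> U" "e1 = {x, q x}" using h1 by blast
    obtain y where y: "y \<in> U" "e2 = {y, q y}" using h2 by blast
    have ax: "q (q x) = x" and ay: "q (q y) = y" using assms[OF x(1)] assms[OF y(1)] by auto
    show "e1 \<inter> e2 = {}"
    proof (rule ccontr)
      assume "e1 \<inter> e2 \<noteq> {}"
      then obtain z where z1: "z \<in> {x, q x}" and z2: "z \<in> {y, q y}" using x y by blast
      have "x = y \<or> x = q y"
      proof -
        { assume "z = q x" "z = q y" then have "x = y" using ax ay by metis }
        moreover { assume "z = q x" "z = y" then have "x = q y" using ax by metis }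
        ultimately show ?thesis using z1 z2 by blast
      qed
      then have "e1 = e2" using x y ay by (auto simp: insert_commute)
      then show False using ne by simp
    qed
  qed
  show "\<Union> {{x, q x} |x. x \<in> U} = U"
  proof
    show "\<Union> {{x, q x} |x. x \<in> U} \<subseteq> U" using assms by blast
    show "U \<subseteq> \<Union> {{x, q x} |x. x \<in> U}" by blast
  qed
qed

lemma pm_partner:
  assumes G: "simple_graph V E" and PM: "perfect_matching V E M"
  obtains p where "\<And>x. x \<in> V \<Longrightarrow> p x \<in> V \<and> p x \<noteq> x \<and> p (p x) = x \<and> {x, p x} \<in> M"
    and "\<And>x y. x \<in> V \<Longrightarrow> {x, y} \<in> M \<Longrightarrow> y = p x"
    and "M = {{x, p x} | x. x \<in> V}"
proof -
  have ME: "M \<subseteq> E" and disj: "\<And>e1 e2. e1\<in>M \<Longrightarrow> e2\<in>M \<Longrightarrow> e1\<noteq>e2 \<Longrightarrow> e1 \<inter> e2 = {}"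
    and U: "\<Union>M = V"
    using PM unfolding perfect_matching_def matching_def by auto
  have uniq: "y = z" if "{x,y} \<in> M" "{x,z} \<in> M" "y \<noteq> x" "z \<noteq> x" for x y z
  proof -
    have "{x,y} = {x,z}" using disj[OF that(1,2)] by blast
    then show ?thesis using that by (metis doubleton_eq_iff)
  qed
  have ex: "\<exists>y. y \<noteq> x \<and> {x,y} \<in> M" if xV: "x \<in> V" for x
  proof -
    obtain e where e: "e \<in> M" "x \<in> e" using U xV by blast
    moreover then obtain a b where "a \<noteq> b" "e = {a,b}" using edge_form[OF G] ME by blast
    ultimately show ?thesis by (metis insert_commute empty_iff insert_iff)
  qed
  define p where "p x = (SOME y. y \<noteq> x \<and> {x,y} \<in> M)" for x
  have p1: "p x \<noteq> x \<and> {x, p x} \<in> M" if "x \<in> V" for x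
    using someI_ex[OF ex[OF that]] unfolding p_def by blast
  have pV: "p x \<in> V" if "x\<in>V" for x using p1[OF that] U by blast
  have sing: "{x} \<notin> M" for x using single_notin[OF G] ME by blast
  have pu: "y = p x" if "x \<in> V" "{x,y} \<in> M" for x y
  proof -
    have "y \<noteq> x" using that sing by auto
    then show ?thesis using uniq[OF that(2)] p1[OF that(1)] by blast
  qed
  have pp: "p (p x) = x" if "x \<in> V" for x
  proof -
    have "{p x, x} \<in> M" using p1[OF that] by (simp add: insert_commute)
    then show ?thesis using pu[OF pV[OF that]] by simp
  qed
  have Meq: "M = {{x, p x} | x. x \<in> V}"
  proof
    show "M \<subseteq> {{x, p x} | x. x \<in> V}"
    proof
      fix e assume "e \<in> M"
      then obtain a b where ab: "a \<noteq> b" "e = {a,b}" using edge_form[OF G] ME by blast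
      have "a \<in> V" using ab \<open>e\<in>M\<close> U by blast
      then have "b = p a" using pu \<open>e\<in>M\<close> ab by blast
      then show "e \<in> {{x, p x} | x. x \<in> V}" using ab \<open>a\<in>V\<close> by blast
    qed
    show "{{x, p x} | x. x \<in> V} \<subseteq> M" using p1 by blast
  qed
  show thesis by (rule that[of p]) (use p1 pV pp pu Meq in auto)
qed

lemma forcing_Q:
  assumes G: "in_G2n n V E" and F: "max_forcing_number V E = n - 1"
  obtains p where "\<And>x. x \<in> V \<Longrightarrow> p x \<in> V \<and> p x \<noteq> x \<and> p (p x) = x \<and> {x, p x} \<in> E"
   and "\<And>x y. x \<in> V \<Longrightarrow> y \<in> V \<Longrightarrow> y \<noteq> x \<Longrightarrow> y \<noteq> p x \<Longrightarrow>
        ({x,y} \<in> E \<and> {p x, p y} \<in> E) \<or> ({x, p y} \<in> E \<and> {p x, y} \<in> E)"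
proof -
  have sg: "simple_graph V E" and cV: "card V = 2*n" and hpm: "has_perfect_matching V E"
    using G unfolding in_G2n_def by auto
  have finV: "finite V" using sg unfolding simple_graph_def by auto
  have sub: "{M. perfect_matching V E M} \<subseteq> Pow (Pow V)"
    unfolding perfect_matching_def by auto
  have finPM: "finite {M. perfect_matching V E M}"
    using finite_subset[OF sub] finV by auto
  have "max_forcing_number V E \<in> {forcing_number V E M | M. perfect_matching V E M}"
    unfolding max_forcing_number_def
    by (rule Max_in) (use finPM hpm in \<open>auto simp: has_perfect_matching_def\<close>)
  then obtain M where PM: "perfect_matching V E M" and fM: "forcing_number V E M = n - 1"
    using F by auto
  obtain p where p1: "\<And>x. x \<in> V \<Longrightarrow> p x \<in> V \<and> p x \<noteq> x \<and> p (p x) = x \<and> {x, p x} \<in> M"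
    and pu: "\<And>x y. x \<in> V \<Longrightarrow> {x, y} \<in> M \<Longrightarrow> y = p x"
    and Meq: "M = {{x, p x} | x. x \<in> V}"
    using pm_partner[OF sg PM] by blast
  have ME: "M \<subseteq> E" using PM unfolding perfect_matching_def matching_def by auto
  have finM: "finite M" using Meq finV by auto
  have cardM: "card M = n"
  proof -
    have "card (\<Union>M) = sum card M"
    proof (rule card_Union_disjoint)
      show "pairwise disjnt M" using PM unfolding perfect_matching_def matching_def pairwise_def disjnt_def
        by auto
      show "finite A" if "A \<in> M" for A using that Meq by auto
    qed
    also have "\<dots> = sum (\<lambda>_. 2) M"
    proof (rule sum.cong)
      fix e assume "e \<in> M"
      then obtain x where "x \<in> V" "e = {x, p x}" using Meq by auto
      then show "card e = 2" using p1[of x] by auto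
    qed simp
    finally have "card V = 2 * card M" using PM unfolding perfect_matching_def by simp
    then show ?thesis using cV by simp
  qed
  have Q: "({x,y} \<in> E \<and> {p x, p y} \<in> E) \<or> ({x, p y} \<in> E \<and> {p x, y} \<in> E)"
    if xV: "x \<in> V" and yV: "y \<in> V" and yx: "y \<noteq> x" and ypx: "y \<noteq> p x" for x y
  proof -
    define a where "a = x"
    define b where "b = p x"
    define c where "c = y"
    define d where "d = p y"
    have pa: "p a = b" and pb: "p b = a" and pc: "p c = d" and pd: "p d = c"
      using p1 xV yV unfolding a_def b_def c_def d_def by auto
    have V4: "a \<in> V" "b \<in> V" "c \<in> V" "d \<in> V" using p1 xV yV unfolding a_def b_def c_def d_def by auto
    have px: "p x \<noteq> x" "p (p x) = x" and py: "p y \<noteq> y" "p (p y) = y" using p1 xV yV by auto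
    have dist: "a \<noteq> b" "c \<noteq> d" "c \<noteq> a" "c \<noteq> b" "d \<noteq> a" "d \<noteq> b"
      unfolding a_def b_def c_def d_def
    proof -
      show "x \<noteq> p x" "y \<noteq> p y" "y \<noteq> x" "y \<noteq> p x" using px py yx ypx by auto
      show "p y \<noteq> x" using py ypx by metis
      show "p y \<noteq> p x" using py px yx by metis
    qed
    define S where "S = M - {{a,b},{c,d}}"
    have e1: "{a,b} \<in> M" "{c,d} \<in> M" using p1 xV yV unfolding a_def b_def c_def d_def by auto
    have neq: "{a,b} \<noteq> {c,d}" using dist by auto
    have "card S = card M - card {{a,b},{c,d}}" unfolding S_def
      using e1 finM by (intro card_Diff_subset) auto
    then have cS: "card S = n - 2" using neq cardM by simp
    have "card {{a,b},{c,d}} \<le> card M" using e1 finM by (intro card_mono) auto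
    then have n2: "n \<ge> 2" using neq cardM by simp
    have "\<not> forcing_set V E M S"
    proof
      assume fs: "forcing_set V E M S"
      have "{card S |S. forcing_set V E M S} \<subseteq> card ` Pow M"
        unfolding forcing_set_def by auto
      then have "finite {card S |S. forcing_set V E M S}"
        using finM finite_subset by blast
      then have "forcing_number V E M \<le> card S" unfolding forcing_number_def
        using fs by (intro Min_le) auto
      then show False using fM cS n2 by simp
    qed
    then obtain M' where PM': "perfect_matching V E M'" and SM': "S \<subseteq> M'" and M'M: "M' \<noteq> M"
      unfolding forcing_set_def S_def by auto
    obtain q where q1: "\<And>x. x \<in> V \<Longrightarrow> q x \<in> V \<and> q x \<noteq> x \<and> q (q x) = x \<and> {x, q x} \<in> M'"
      and qu: "\<And>x y. x \<in> V \<Longrightarrow> {x, y} \<in> M' \<Longrightarrow> y = q x"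
      and M'eq: "M' = {{x, q x} | x. x \<in> V}"
      using pm_partner[OF sg PM'] by blast
    have M'E: "M' \<subseteq> E" using PM' unfolding perfect_matching_def matching_def by auto
    have qz: "q z = p z" if "z \<in> V" "z \<notin> {a,b,c,d}" for z
    proof -
      have "{z, p z} \<in> M" using p1 that by auto
      moreover have "{z, p z} \<noteq> {a,b}" "{z, p z} \<noteq> {c,d}" using that by auto
      ultimately have "{z, p z} \<in> M'" using SM' unfolding S_def by auto
      then show ?thesis using qu that by metis
    qed
    have q4: "q w \<in> {a,b,c,d}" if "w \<in> {a,b,c,d}" for w
    proof (rule ccontr)
      assume nin: "q w \<notin> {a,b,c,d}"
      have wV: "w \<in> V" using that V4 by auto
      have "q (q w) = p (q w)" using qz[OF _ nin] q1[OF wV] by auto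
      then have "p (q w) = w" using q1[OF wV] by auto
      then have "q w = p w" using p1 q1 wV by metis
      then show False using nin that pa pb pc pd by auto
    qed
    have qa: "q a \<noteq> a" "q b \<noteq> b" "q c \<noteq> c" "q d \<noteq> d" and qq: "q (q a) = a" "q (q b) = b" "q (q c) = c" "q (q d) = d"
      using q1 V4 by auto
    have cases: "q a = b \<or> q a = c \<or> q a = d" using q4[of a] qa by auto
    show ?thesis
    proof -
      { assume "q a = b"
        then have qb: "q b = a" using qq by auto
        have "q c \<in> {a,b,c,d}" using q4 by auto
        then have "q c = d" using qa qq qb \<open>q a = b\<close> dist by auto
        then have qd: "q d = c" using qq by auto
        have "\<forall>z\<in>V. q z = p z"
        proof
          fix z assume "z \<in> V"
          show "q z = p z"
          proof (cases "z \<in> {a,b,c,d}")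
            case True then show ?thesis using \<open>q a = b\<close> qb \<open>q c = d\<close> qd pa pb pc pd by auto
          next
            case False then show ?thesis using qz \<open>z\<in>V\<close> by auto
          qed
        qed
        then have "M' = M" using M'eq Meq by auto
        then have False using M'M by simp }
      moreover
      { assume h: "q a = c"
        then have "q b \<in> {a,b,c,d}" using q4 by auto
        then have "q b = d" using qa qq h dist by (metis insertE singletonD)
        then have "{a,c} \<in> E" "{b,d} \<in> E" using q1 V4 M'E h by auto
        then have ?thesis unfolding a_def b_def c_def d_def by auto }
      moreover
      { assume h: "q a = d"
        then have "q b \<in> {a,b,c,d}" using q4 by auto
        then have "q b = c" using qa qq h dist by (metis insertE singletonD)
        then have "{a,d} \<in> E" "{b,c} \<in> E" using q1 V4 M'E h by auto
        then have ?thesis unfolding a_def b_def c_def d_def by auto }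
      ultimately show ?thesis using cases by blast
    qed
  qed
  show thesis by (rule that[of p]) (use p1 ME Q in auto)
qed



lemma Kplus_indep:
  assumes "in_Kplus n V E" "simple_graph V E"
  shows "\<exists>I. independent_set V E I \<and> card I = n"
proof -
  obtain A B where AB: "A \<inter> B = {}" "A \<union> B = V" "card B = n"
    and edges: "\<forall>e\<in>E. e \<subseteq> A \<or> (\<exists>a\<in>A. \<exists>b\<in>B. e = {a, b})"
    using assms(1) unfolding in_Kplus_def by (elim exE conjE) simp
  have "independent_set V E B" unfolding independent_set_def
  proof (intro conjI ballI)
    show "B \<subseteq> V" using AB(2) by (rule subst) (rule Un_upper2)
    fix u v assume uv: "u \<in> B" "v \<in> B"
    show "{u, v} \<notin> E"
    proof
      assume e: "{u,v} \<in> E"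
      have "{u,v} \<subseteq> A \<or> (\<exists>a\<in>A. \<exists>b\<in>B. {u,v} = {a, b})" using bspec[OF edges e] .
      then show False
      proof
        assume "{u,v} \<subseteq> A" then have "u \<in> A" by simp
        then show False using uv AB by blast
      next
        assume "\<exists>a\<in>A. \<exists>b\<in>B. {u,v} = {a, b}"
        then obtain a b where ab: "a \<in> A" "b \<in> B" "{u,v} = {a, b}" by blast
        then have "a = u \<or> a = v" by (auto simp: doubleton_eq_iff)
        then show False using uv AB ab(1) by blast
      qed
    qed
  qed
  then show ?thesis using AB(3) by (intro exI[of _ B]) simp
qed

locale pg =
  fixes V :: "'a set" and E :: "'a set set" and p :: "'a \<Rightarrow> 'a" and n :: nat
  assumes sg: "simple_graph V E" and cardV: "card V = 2 * n"
    and p1: "\<And>x. x \<in> V \<Longrightarrow> p x \<in> V \<and> p x \<noteq> x \<and> p (p x) = x \<and> {x, p x} \<in> E"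
    and Q: "\<And>x y. x \<in> V \<Longrightarrow> y \<in> V \<Longrightarrow> y \<noteq> x \<Longrightarrow> y \<noteq> p x \<Longrightarrow>
        ({x,y} \<in> E \<and> {p x, p y} \<in> E) \<or> ({x, p y} \<in> E \<and> {p x, y} \<in> E)"
begin

lemma finV: "finite V" using sg unfolding simple_graph_def by auto
lemma pV: "x \<in> V \<Longrightarrow> p x \<in> V" using p1 by blast
lemma pne: "x \<in> V \<Longrightarrow> p x \<noteq> x" using p1 by blast
lemma pp: "x \<in> V \<Longrightarrow> p (p x) = x" using p1 by blast
lemma pE: "x \<in> V \<Longrightarrow> {x, p x} \<in> E" using p1 by blast
lemma pE': "x \<in> V \<Longrightarrow> {p x, x} \<in> E" using p1 by (simp add: insert_commute)
lemma Esym: "{x,y} \<in> E \<Longrightarrow> {y,x} \<in> E" by (simp add: insert_commute)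
lemma Esub: "{x,y} \<in> E \<Longrightarrow> x \<in> V \<and> y \<in> V \<and> x \<noteq> y"
proof -
  assume "{x,y} \<in> E"
  then have "\<exists>u v. u \<in> V \<and> v \<in> V \<and> u \<noteq> v \<and> {x,y} = {u,v}" by (rule edge_form[OF sg])
  then obtain u v where "u \<in> V" "v \<in> V" "u \<noteq> v" "{x,y} = {u,v}" by (elim exE conjE)
  then show ?thesis unfolding doubleton_eq_iff by auto
qed
lemma edge_obt:
  assumes "e \<in> E" obtains u v where "u \<in> V" "v \<in> V" "u \<noteq> v" "e = {u,v}"
proof -
  have "\<exists>u v. u \<in> V \<and> v \<in> V \<and> u \<noteq> v \<and> e = {u,v}" by (rule edge_form[OF sg assms])
  then obtain u v where "u \<in> V" "v \<in> V" "u \<noteq> v" "e = {u,v}" by (elim exE conjE)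
  then show thesis by (rule that)
qed
lemma sing: "{x} \<notin> E" using single_notin[OF sg] .
lemma p_eq: "x \<in> V \<Longrightarrow> y \<in> V \<Longrightarrow> (p x = y) = (x = p y)"
proof -
  assume xV: "x \<in> V" and yV: "y \<in> V"
  show ?thesis
  proof
    assume "p x = y" then show "x = p y" using pp[OF xV] by simp
  next
    assume "x = p y" then show "p x = y" using pp[OF yV] by simp
  qed
qed
lemma pinj: "inj_on p V"
proof (rule inj_onI)
  fix x y assume "x \<in> V" "y \<in> V" "p x = p y"
  then have "p (p x) = p (p y)" by simp
  then show "x = y" using pp[of x] pp[of y] \<open>x \<in> V\<close> \<open>y \<in> V\<close> by simp
qed

lemma cross:
  assumes "x \<in> V" "y \<in> V" "y \<noteq> x" "y \<noteq> p x"
  shows "\<exists>s\<in>{y, p y}. {x,s} \<in> E \<and> {p x, p s} \<in> E"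
proof -
  from Q[OF assms] show ?thesis
  proof
    assume "{x,y} \<in> E \<and> {p x, p y} \<in> E" then show ?thesis by blast
  next
    assume "{x, p y} \<in> E \<and> {p x, y} \<in> E"
    then have "{x, p y} \<in> E \<and> {p x, p (p y)} \<in> E" using pp[OF assms(2)] by simp
    then show ?thesis by blast
  qed
qed

lemma indep_Kplus:
  assumes I: "independent_set V E I" "card I = n"
  shows "in_Kplus n V E"
proof -
  have IV: "I \<subseteq> V" and Ind: "\<And>u v. u\<in>I \<Longrightarrow> v\<in>I \<Longrightarrow> {u,v} \<notin> E"
    using I unfolding independent_set_def by auto
  have disj: "I \<inter> p ` I = {}"
  proof (rule ccontr)
    assume "I \<inter> p ` I \<noteq> {}" then obtain w where "w \<in> I" "p w \<in> I" by blast
    then show False using Ind pE IV by blast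
  qed
  have cpI: "card (p ` I) = n" using card_image[OF inj_on_subset[OF pinj IV]] I(2) by simp
  have fin: "finite I" using IV finite_subset finV by blast
  then have "card (I \<union> p ` I) = 2 * n" using card_Un_disjoint[OF fin _ disj] cpI I(2) by simp
  moreover have sub: "I \<union> p ` I \<subseteq> V" using IV pV by blast
  ultimately have cov: "I \<union> p ` I = V" using card_subset_eq[OF finV sub] cardV by simp
  have one: "x \<in> I \<or> p x \<in> I" if "x \<in> V" for x
  proof -
    have "x \<in> I \<or> x \<in> p ` I" using cov that by blast
    then show ?thesis using pp IV by auto
  qed
  show ?thesis unfolding in_Kplus_def
  proof (rule exI[of _ "V - I"], rule exI[of _ I], intro conjI ballI)
    show "(V - I) \<inter> I = {}" by blast
    show "V - I \<union> I = V" using IV by blast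
    show "card (V - I) = n" using card_Diff_subset[OF fin IV] cardV I(2) by simp
    show "card I = n" by fact
  next
    fix a b assume a: "a \<in> V - I" and b: "b \<in> I"
    have aV: "a \<in> V" and bV: "b \<in> V" using a b IV by auto
    have pa: "p a \<in> I" using one[OF aV] a by blast
    show "{a, b} \<in> E"
    proof (cases "b = p a")
      case True then show ?thesis using pE aV by simp
    next
      case False
      have "b \<noteq> a" using a b by blast
      from Q[OF aV bV this False] show ?thesis using Ind[OF pa b] by blast
    qed
  next
    fix e assume e: "e \<in> E"
    then obtain u v where uv: "u \<in> V" "v \<in> V" "u \<noteq> v" "e = {u,v}" by (rule edge_obt)
    show "e \<subseteq> V - I \<or> (\<exists>a\<in>V - I. \<exists>b\<in>I. e = {a, b})"
    proof (cases "u \<in> I")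
      case True
      then have "v \<notin> I" using Ind e uv by blast
      then show ?thesis using uv True by (auto simp: insert_commute)
    next
      case False
      then show ?thesis using uv by auto
    qed
  qed
qed

lemma hpm:
  assumes "\<And>x. x \<in> V - X \<Longrightarrow> q x \<in> V - X \<and> q x \<noteq> x \<and> q (q x) = x \<and> {x, q x} \<in> E"
  shows "has_perfect_matching (V - X) (del_edges E V X)"
  unfolding has_perfect_matching_def
proof
  show "perfect_matching (V - X) (del_edges E V X) {{x, q x} | x. x \<in> V - X}"
  proof (rule inv_pm)
    fix x assume x: "x \<in> V - X"
    show "q x \<in> V - X \<and> q x \<noteq> x \<and> q (q x) = x \<and> {x, q x} \<in> del_edges E V X"
      using assms[OF x] x unfolding del_edges_def by auto
  qed
qed

end



locale pg2 = pg + assumes noind: "\<not> (\<exists>I. independent_set V E I \<and> card I = n)"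
begin

lemma n2: "n \<ge> 2"
proof (rule ccontr)
  assume "\<not> n \<ge> 2" hence "n = 0 \<or> n = 1" by auto
  then show False
  proof
    assume n0: "n = 0"
    have "independent_set V E {}" unfolding independent_set_def by simp
    then have "\<exists>I. independent_set V E I \<and> card I = n" using n0 by (intro exI[of _ "{}"]) simp
    with noind show False by simp
  next
    assume n1: "n = 1"
    then have "card V = 2" using cardV by simp
    then have "V \<noteq> {}" by auto
    then obtain x where xV: "x \<in> V" by blast
    have "independent_set V E {x}" unfolding independent_set_def using xV sing by simp
    then have "\<exists>I. independent_set V E I \<and> card I = n" using n1 by (intro exI[of _ "{x}"]) simp
    with noind show False by simp
  qed
qed

lemma Vne: "V \<noteq> {}" using cardV n2 by auto

lemma bicrit: "bicritical V E"
  unfolding bicritical_def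
proof (intro conjI ballI impI)
  obtain x where "x \<in> V" using Vne by blast
  then show "E \<noteq> {}" using pE by blast
next
  fix u v assume uV: "u \<in> V" and vV: "v \<in> V" and uv: "u \<noteq> v"
  show "has_perfect_matching (V - {u, v}) (del_edges E V {u, v})"
  proof (cases "v = p u")
    case True
    show ?thesis
    proof (rule hpm[of _ p])
      fix x assume x: "x \<in> V - {u, v}"
      hence xV: "x \<in> V" by simp
      have "p x \<noteq> u" using p_eq[OF xV uV] True x by simp
      moreover have "p x \<noteq> v" using p_eq[OF xV pV[OF uV]] pp[OF uV] True x by simp
      ultimately show "p x \<in> V - {u, v} \<and> p x \<noteq> x \<and> p (p x) = x \<and> {x, p x} \<in> E"
        using pV[OF xV] pne[OF xV] pp[OF xV] pE[OF xV] by simp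
    qed
  next
    case False
    define u' where "u' = p u"
    define v' where "v' = p v"
    have u'V: "u' \<in> V" and v'V: "v' \<in> V" using pV uV vV unfolding u'_def v'_def by auto
    have pu': "p u' = u" and pv': "p v' = v" using pp uV vV unfolding u'_def v'_def by auto
    have pu: "p u = u'" and pv: "p v = v'" unfolding u'_def v'_def by auto
    have d1: "u \<noteq> u'" "v \<noteq> v'" "u \<noteq> v" "v \<noteq> u'" "u \<noteq> v'" "u' \<noteq> v'"
    proof -
      show "u \<noteq> u'" using pne[OF uV] unfolding u'_def by simp
      show "v \<noteq> v'" using pne[OF vV] unfolding v'_def by simp
      show "u \<noteq> v" by fact
      show "v \<noteq> u'" using False unfolding u'_def by simp
      show "u \<noteq> v'" using False p_eq[OF vV uV] unfolding v'_def by auto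
      show "u' \<noteq> v'" using uv pinj uV vV unfolding u'_def v'_def inj_on_def by blast
    qed
    define W where "W = V - {u, u', v, v'}"
    have WV: "W \<subseteq> V" unfolding W_def by blast
    have pW: "p w \<in> W" if w: "w \<in> W" for w
    proof -
      have wV: "w \<in> V" using w WV by blast
      have "p w \<noteq> u" using p_eq[OF wV uV] pu w unfolding W_def by auto
      moreover have "p w \<noteq> v" using p_eq[OF wV vV] pv w unfolding W_def by auto
      moreover have "p w \<noteq> u'" using p_eq[OF wV u'V] pu' w unfolding W_def by auto
      moreover have "p w \<noteq> v'" using p_eq[OF wV v'V] pv' w unfolding W_def by auto
      ultimately show ?thesis using pV[OF wV] unfolding W_def by simp
    qed
    have Wcase: "x = u' \<or> x = v' \<or> x \<in> W" if "x \<in> V - {u,v}" for x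
      using that unfolding W_def by auto
    show ?thesis
    proof (cases "{u',v'} \<in> E")
      case True
      define q where "q = p(u' := v', v' := u')"
      show ?thesis
      proof (rule hpm[of _ q])
        fix x assume x: "x \<in> V - {u,v}"
        show "q x \<in> V - {u,v} \<and> q x \<noteq> x \<and> q (q x) = x \<and> {x, q x} \<in> E"
        proof -
          { assume "x = u'"
            then have ?thesis using True d1 u'V v'V unfolding q_def by auto }
          moreover
          { assume "x = v'"
            then have ?thesis using True d1 u'V v'V Esym[OF True] unfolding q_def by auto }
          moreover
          { assume xW: "x \<in> W"
            have xV: "x \<in> V" using xW WV by blast
            have "x \<noteq> u'" "x \<noteq> v'" using xW unfolding W_def by auto
            moreover have "p x \<noteq> u'" "p x \<noteq> v'" "p x \<noteq> u" "p x \<noteq> v" using pW[OF xW] unfolding W_def by auto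
            ultimately have ?thesis using pne[OF xV] pp[OF xV] pE[OF xV] pV[OF xV] unfolding q_def by simp }
          ultimately show ?thesis using Wcase[OF x] by blast
        qed
      qed
    next
      case noE: False
      show ?thesis
      proof (cases "\<exists>w\<in>W. {u',w} \<in> E \<and> {v', p w} \<in> E")
        case True
        then obtain w where wW: "w \<in> W" and e1: "{u',w} \<in> E" and e2: "{v', p w} \<in> E" by blast
        define w' where "w' = p w"
        have wV: "w \<in> V" using wW WV by blast
        have w'W: "w' \<in> W" using pW[OF wW] unfolding w'_def .
        have pw': "p w' = w" using pp[OF wV] unfolding w'_def .
        have ww': "w \<noteq> w'" using pne[OF wV] unfolding w'_def by simp
        have dw: "w \<noteq> u'" "w \<noteq> v'" "w' \<noteq> u'" "w' \<noteq> v'" "w \<noteq> u" "w \<noteq> v" "w' \<noteq> u" "w' \<noteq> v"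
          using wW w'W unfolding W_def by auto
        define q where "q = p(u' := w, w := u', v' := w', w' := v')"
        show ?thesis
        proof (rule hpm[of _ q])
          fix x assume x: "x \<in> V - {u,v}"
          show "q x \<in> V - {u,v} \<and> q x \<noteq> x \<and> q (q x) = x \<and> {x, q x} \<in> E"
          proof -
            have W4: "w \<in> V - {u,v}" "w' \<in> V - {u,v}" "u' \<in> V - {u,v}" "v' \<in> V - {u,v}"
              using wW w'W WV u'V v'V d1 dw by auto
            { assume "x = u'"
              then have ?thesis using e1 d1 dw ww' W4 unfolding q_def by auto }
            moreover
            { assume "x = v'"
              then have ?thesis using e2 d1 dw ww' W4 unfolding q_def w'_def[symmetric] by auto }
            moreover
            { assume "x = w"
              then have ?thesis using Esym[OF e1] d1 dw ww' W4 unfolding q_def by auto }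
            moreover
            { assume "x = w'"
              then have ?thesis using Esym[OF e2] d1 dw ww' W4 unfolding q_def w'_def[symmetric] by auto }
            moreover
            { assume xW: "x \<in> W" and xw: "x \<noteq> w" "x \<noteq> w'"
              have xV: "x \<in> V" using xW WV by blast
              have "x \<noteq> u'" "x \<noteq> v'" using xW unfolding W_def by auto
              moreover have "p x \<noteq> u'" "p x \<noteq> v'" "p x \<noteq> u" "p x \<noteq> v" using pW[OF xW] unfolding W_def by auto
              moreover have "p x \<noteq> w" using p_eq[OF xV wV] xw unfolding w'_def by simp
              moreover have "p x \<noteq> w'" using p_eq[OF xV] pV[OF wV] pp[OF wV] xw unfolding w'_def by simp
              ultimately have ?thesis using xw pne[OF xV] pp[OF xV] pE[OF xV] pV[OF xV] unfolding q_def by simp }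
            ultimately show ?thesis using Wcase[OF x] by blast
          qed
        qed
      next
        case noW: False
        define D where "D = {w \<in> W. {u',w} \<notin> E}"
        have DW: "D \<subseteq> W" unfolding D_def by blast
        have fa: "{u',w} \<in> E \<or> {u', p w} \<in> E" and fb: "{v',w} \<in> E \<or> {v', p w} \<in> E"
          if wW: "w \<in> W" for w
        proof -
          have wV: "w \<in> V" using wW WV by blast
          have "w \<noteq> u'" "w \<noteq> p u'" "w \<noteq> v'" "w \<noteq> p v'" using wW pu' pv' unfolding W_def by auto
          then show "{u',w} \<in> E \<or> {u', p w} \<in> E" "{v',w} \<in> E \<or> {v', p w} \<in> E"
            using Q[OF u'V wV] Q[OF v'V wV] by blast+
        qed
        have fc: "\<not> ({u',w} \<in> E \<and> {v', p w} \<in> E)" if "w \<in> W" for w using noW that by blast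
        have fc': "\<not> ({u',p w} \<in> E \<and> {v', w} \<in> E)" if wW: "w \<in> W" for w
          using fc[OF pW[OF wW]] pp[of w] wW WV by auto
        have dD: "{u', p w} \<in> E \<and> {v', p w} \<in> E \<and> {v', w} \<notin> E \<and> p w \<notin> D" if wD: "w \<in> D" for w
        proof -
          have wW: "w \<in> W" and nu: "{u',w} \<notin> E" using wD unfolding D_def by auto
          have a: "{u', p w} \<in> E" using fa[OF wW] nu by blast
          then have b: "{v',w} \<notin> E" using fc'[OF wW] by blast
          then have "{v', p w} \<in> E" using fb[OF wW] by blast
          moreover have "p w \<notin> D" using a unfolding D_def by blast
          ultimately show ?thesis using a b by blast
        qed
        have nD: "p w \<in> D" if wW: "w \<in> W" and wD: "w \<notin> D" for w
        proof -
          have a: "{u', w} \<in> E" using wD wW unfolding D_def by blast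
          then have "{v', p w} \<notin> E" using fc[OF wW] by blast
          then have "{v', w} \<in> E" using fb[OF wW] by blast
          then have "{u', p w} \<notin> E" using fc'[OF wW] by blast
          then show ?thesis using pW[OF wW] unfolding D_def by blast
        qed
        show ?thesis
        proof (cases "\<exists>w\<in>D. \<exists>z\<in>D. {w,z} \<in> E")
          case True
          then obtain w z where wD: "w \<in> D" and zD: "z \<in> D" and ewz: "{w,z} \<in> E" by blast
          have wW: "w \<in> W" and zW: "z \<in> W" using wD zD DW by auto
          have wV: "w \<in> V" and zV: "z \<in> V" using wW zW WV by auto
          define w' where "w' = p w"
          define z' where "z' = p z"
          have w'W: "w' \<in> W" and z'W: "z' \<in> W" using pW wW zW unfolding w'_def z'_def by auto
          have pw': "p w' = w" and pz': "p z' = z" using pp wV zV unfolding w'_def z'_def by auto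
          have pw: "p w = w'" and pz: "p z = z'" unfolding w'_def z'_def by auto
          have wz: "w \<noteq> z" using ewz sing by auto
          have w'D: "w' \<notin> D" and z'D: "z' \<notin> D" using dD wD zD unfolding w'_def z'_def by auto
          have e1: "{u', w'} \<in> E" and e2: "{v', z'} \<in> E"
            using dD wD zD unfolding w'_def z'_def by auto
          have d2: "w \<noteq> w'" "z \<noteq> z'" "w \<noteq> z'" "z \<noteq> w'" "w' \<noteq> z'"
          proof -
            show "w \<noteq> w'" using pne[OF wV] unfolding w'_def by simp
            show "z \<noteq> z'" using pne[OF zV] unfolding z'_def by simp
            show "w \<noteq> z'" using zD w'D z'D wD by auto
            show "z \<noteq> w'" using zD w'D by auto
            show "w' \<noteq> z'" using wz pinj wV zV unfolding w'_def z'_def inj_on_def by blast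
          qed
          have dW: "w \<noteq> u'" "w \<noteq> v'" "w' \<noteq> u'" "w' \<noteq> v'" "w \<noteq> u" "w \<noteq> v" "w' \<noteq> u" "w' \<noteq> v"
             "z \<noteq> u'" "z \<noteq> v'" "z' \<noteq> u'" "z' \<noteq> v'" "z \<noteq> u" "z \<noteq> v" "z' \<noteq> u" "z' \<noteq> v"
            using wW w'W zW z'W unfolding W_def by auto
          have W6: "w \<in> V - {u,v}" "w' \<in> V - {u,v}" "z \<in> V - {u,v}" "z' \<in> V - {u,v}"
              "u' \<in> V - {u,v}" "v' \<in> V - {u,v}"
            using wW w'W zW z'W WV u'V v'V d1 dW by auto
          define q where "q = p(u' := w', w' := u', v' := z', z' := v', w := z, z := w)"
          show ?thesis
          proof (rule hpm[of _ q])
            fix x assume x: "x \<in> V - {u,v}"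
            show "q x \<in> V - {u,v} \<and> q x \<noteq> x \<and> q (q x) = x \<and> {x, q x} \<in> E"
            proof -
              note ds = d1 d2 dW d1[symmetric] d2[symmetric] dW[symmetric] wz wz[symmetric]
              { assume "x = u'"
                then have ?thesis using e1 ds W6 unfolding q_def by simp }
              moreover
              { assume "x = v'"
                then have ?thesis using e2 ds W6 unfolding q_def by simp }
              moreover
              { assume "x = w'"
                then have ?thesis using Esym[OF e1] ds W6 unfolding q_def by simp }
              moreover
              { assume "x = z'"
                then have ?thesis using Esym[OF e2] ds W6 unfolding q_def by simp }
              moreover
              { assume "x = w"
                then have ?thesis using ewz ds W6 unfolding q_def by simp }
              moreover
              { assume "x = z"
                then have ?thesis using Esym[OF ewz] ds W6 unfolding q_def by simp }
              moreover
              { assume xW: "x \<in> W" and xw: "x \<noteq> w" "x \<noteq> w'" "x \<noteq> z" "x \<noteq> z'"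
                have xV: "x \<in> V" using xW WV by blast
                have "x \<noteq> u'" "x \<noteq> v'" using xW unfolding W_def by auto
                moreover have "p x \<noteq> u'" "p x \<noteq> v'" "p x \<noteq> u" "p x \<noteq> v" using pW[OF xW] unfolding W_def by auto
                moreover have "p x \<noteq> w" "p x \<noteq> w'" "p x \<noteq> z" "p x \<noteq> z'"
                  using p_eq[OF xV wV] p_eq[OF xV zV] p_eq[OF xV pV[OF wV]] p_eq[OF xV pV[OF zV]]
                    pp[OF wV] pp[OF zV] xw unfolding w'_def z'_def by auto
                ultimately have ?thesis using xw pne[OF xV] pp[OF xV] pE[OF xV] pV[OF xV] unfolding q_def by simp }
              ultimately show ?thesis using Wcase[OF x] by blast
            qed
          qed
        next
          case noD: False
          define I where "I = insert u' (insert v' D)"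
          have finW: "finite W" using finV WV finite_subset by blast
          have finD: "finite D" using finW DW finite_subset by blast
          have cW: "card W = 2 * n - 4"
          proof -
            have "card {u, u', v, v'} = 4" using d1 by auto
            moreover have "{u, u', v, v'} \<subseteq> V" using uV vV u'V v'V by auto
            ultimately show ?thesis unfolding W_def using card_Diff_subset[OF _ \<open>{u, u', v, v'} \<subseteq> V\<close>] cardV by simp
          qed
          have WD: "W = D \<union> p ` D"
          proof
            show "W \<subseteq> D \<union> p ` D"
            proof
              fix w assume wW: "w \<in> W"
              show "w \<in> D \<union> p ` D"
              proof (cases "w \<in> D")
                case False
                then have "p w \<in> D" using nD wW by blast
                moreover have "w = p (p w)" using pp wW WV by auto
                ultimately show ?thesis by blast
              qed simp
            qed
            show "D \<union> p ` D \<subseteq> W" using DW pW by blast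
          qed
          have disj: "D \<inter> p ` D = {}" using dD by blast
          have "card (p ` D) = card D" using card_image[OF inj_on_subset[OF pinj]] DW WV by blast
          then have "card W = 2 * card D" using WD card_Un_disjoint[OF finD _ disj] finD by simp
          then have cD: "card D = n - 2" using cW n2 by simp
          have "u' \<notin> D" "v' \<notin> D" using DW unfolding W_def by auto
          then have cI: "card I = n" unfolding I_def using cD finD d1 n2 by simp
          have "independent_set V E I" unfolding independent_set_def
          proof (intro conjI ballI)
            show "I \<subseteq> V" unfolding I_def using u'V v'V DW WV by blast
            fix a b assume a: "a \<in> I" and b: "b \<in> I"
            have nuv: "{u',v'} \<notin> E" "{v',u'} \<notin> E" using noE Esym by blast+
            have ndu: "{u',w} \<notin> E" "{w,u'} \<notin> E" "{v',w} \<notin> E" "{w,v'} \<notin> E" if "w \<in> D" for w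
              using that dD[OF that] Esym unfolding D_def by blast+
            have ndd: "{w,z} \<notin> E" if "w \<in> D" "z \<in> D" for w z using noD that by blast
            show "{a, b} \<notin> E"
            proof (cases "a = b")
              case True then show ?thesis using sing by simp
            next
              case False
              then show ?thesis using a b nuv ndu ndd unfolding I_def by auto
            qed
          qed
          then show ?thesis using noind cI by blast
        qed
      qed
    qed
  qed
qed


lemma kconn: "k_connected 3 V E"
  unfolding k_connected_def
proof (intro conjI allI impI)
  show "3 < card V" using cardV n2 by simp
next
  fix X assume X: "X \<subseteq> V \<and> card X < 3"
  have XV: "X \<subseteq> V" and cX: "card X < 3" using X by auto
  have finX: "finite X" using finV XV finite_subset by blast
  let ?R = "\<lambda>x y. {x, y} \<in> del_edges E V X"
  have edge: "?R x y" if e: "{x,y} \<in> E" and xX: "x \<notin> X" and yX: "y \<notin> X" for x y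
    using e xX yX Esub[OF e] unfolding del_edges_def by auto
  show "connected_graph (V - X) (del_edges E V X)"
    unfolding connected_graph_def
  proof (intro conjI ballI)
    show "V - X \<noteq> {}"
    proof
      assume "V - X = {}" then have "V \<subseteq> X" by blast
      then have "card V \<le> card X" using card_mono[OF finX] by blast
      then show False using cX cardV n2 by simp
    qed
  next
    fix a b assume a: "a \<in> V - X" and b: "b \<in> V - X"
    have aV: "a \<in> V" and aX: "a \<notin> X" and bV: "b \<in> V" and bX: "b \<notin> X" using a b by auto
    show "?R\<^sup>*\<^sup>* a b"
    proof (cases "a = b")
      case True then show ?thesis by simp
    next
      case ab: False
      show ?thesis
      proof (cases "b = p a")
        case True
        have "?R a b" using edge[OF pE[OF aV]] True aX bX by simp
        then show ?thesis by (rule r_into_rtranclp)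
      next
        case bpa: False
        have ba: "b \<noteq> a" using ab by simp
        have apb: "a \<noteq> p b" using bpa p_eq[OF bV aV] by auto
        obtain s where s: "s \<in> {b, p b}" "{a,s} \<in> E" using cross[OF aV bV ba bpa] by blast
        obtain t where t: "t \<in> {a, p a}" "{b,t} \<in> E" using cross[OF bV aV ab apb] by blast
        show ?thesis
        proof (cases "s \<in> X")
          case False
          have r1: "?R a s" using edge[OF s(2) aX False] .
          have r2: "?R\<^sup>*\<^sup>* s b"
          proof (cases "s = b")
            case True then show ?thesis by simp
          next
            case False
            then have "s = p b" using s by blast
            then show ?thesis using edge[OF pE'[OF bV]] \<open>s \<notin> X\<close> bX by (intro r_into_rtranclp) simp
          qed
          show ?thesis using r1 r2 by (rule converse_rtranclp_into_rtranclp)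
        next
          case sX: True
          show ?thesis
          proof (cases "t \<in> X")
            case False
            have r2: "?R t b" using edge[OF Esym[OF t(2)] False bX] .
            have r1: "?R\<^sup>*\<^sup>* a t"
            proof (cases "t = a")
              case True then show ?thesis by simp
            next
              case False
              then have "t = p a" using t by blast
              then show ?thesis using edge[OF pE[OF aV]] \<open>t \<notin> X\<close> aX by (intro r_into_rtranclp) simp
            qed
            show ?thesis using r1 r2 by (rule rtranclp.rtrancl_into_rtrancl)
          next
            case tX: True
            have spb: "s = p b" using s sX bX by auto
            have tpa: "t = p a" using t tX aX by auto
            have papb: "p a \<noteq> p b" using ab pinj aV bV unfolding inj_on_def by blast
            have notX: "w \<notin> X" if wV: "w \<in> V" and wn: "w \<notin> {a, p a, b, p b}" for w
            proof
              assume wX: "w \<in> X"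
              have "{p a, p b, w} \<subseteq> X" using wX sX tX spb tpa by auto
              moreover have "card {p a, p b, w} = 3" using papb wn by auto
              ultimately have "card {p a, p b, w} \<le> card X" by (intro card_mono[OF finX])
              then have "3 \<le> card X" using \<open>card {p a, p b, w} = 3\<close> by simp
              then show False using cX by simp
            qed
            show ?thesis
            proof (cases "n = 2")
              case True
              have "{a,b} \<in> E"
              proof (rule ccontr)
                assume nab: "{a,b} \<notin> E"
                have "independent_set V E {a,b}" unfolding independent_set_def
                  using aV bV nab Esym sing by auto
                moreover have "card {a,b} = n" using ab True by simp
                ultimately show False using noind by blast
              qed
              then have "?R a b" using edge aX bX by simp
              then show ?thesis by (rule r_into_rtranclp)
            next
              case False
              then have n3: "n \<ge> 3" using n2 by simp
              have "card (set [a, p a, b, p b]) \<le> length [a, p a, b, p b]" by (rule card_length)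
              then have c4: "card {a, p a, b, p b} \<le> 4" by simp
              have "\<not> V \<subseteq> {a, p a, b, p b}"
              proof
                assume "V \<subseteq> {a, p a, b, p b}"
                then have "card V \<le> card {a, p a, b, p b}" by (intro card_mono) auto
                then show False using c4 cardV n3 by simp
              qed
              then obtain w where wV: "w \<in> V" and wn: "w \<notin> {a, p a, b, p b}" by blast
              have "p w \<noteq> a" using wn p_eq[OF wV aV] by simp
              moreover have "p w \<noteq> b" using wn p_eq[OF wV bV] by simp
              moreover have "p w \<noteq> p a" using wn p_eq[OF wV pV[OF aV]] pp[OF aV] by simp
              moreover have "p w \<noteq> p b" using wn p_eq[OF wV pV[OF bV]] pp[OF bV] by simp
              ultimately have pwn: "p w \<notin> {a, p a, b, p b}" by simp
              have wX: "w \<notin> X" using notX[OF wV wn] .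
              have pwX: "p w \<notin> X" using notX[OF pV[OF wV] pwn] .
              have wd: "w \<noteq> a" "w \<noteq> p a" "w \<noteq> b" "w \<noteq> p b" using wn by auto
              obtain s1 where s1: "s1 \<in> {w, p w}" "{a,s1} \<in> E" using cross[OF aV wV wd(1,2)] by blast
              obtain s2 where s2: "s2 \<in> {w, p w}" "{b,s2} \<in> E" using cross[OF bV wV wd(3,4)] by blast
              have s1X: "s1 \<notin> X" and s2X: "s2 \<notin> X" using s1 s2 wX pwX by auto
              have r1: "?R a s1" using edge[OF s1(2) aX s1X] .
              have r3: "?R s2 b" using edge[OF Esym[OF s2(2)] s2X bX] .
              have r2: "?R\<^sup>*\<^sup>* s1 s2"
              proof (cases "s1 = s2")
                case True then show ?thesis by simp
              next
                case False
                then have "{s1,s2} = {w, p w}" using s1 s2 by auto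
                then have "?R s1 s2" using edge[OF pE[OF wV] wX pwX] by simp
                then show ?thesis by (rule r_into_rtranclp)
              qed
              show ?thesis
                using converse_rtranclp_into_rtranclp[OF r1 rtranclp.rtrancl_into_rtrancl[OF r2 r3]] .
            qed
          qed
        qed
      qed
    qed
  qed
qed

lemma delE: "del_edges E V {} = E"
proof -
  have "e \<subseteq> V" if "e \<in> E" for e using that by (rule edge_obt) auto
  then show ?thesis unfolding del_edges_def by auto
qed

lemma ext1: "extendable 1 V E"
  unfolding extendable_def
proof (intro conjI allI impI)
  have kc: "\<forall>X. X \<subseteq> V \<and> card X < 3 \<longrightarrow> connected_graph (V - X) (del_edges E V X)"
    using kconn unfolding k_connected_def by (rule conjunct2)
  have "connected_graph (V - {}) (del_edges E V {})" using spec[OF kc, of "{}"] by simp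
  then show "connected_graph V E" using delE by simp
  show "2 * 1 + 2 \<le> card V" using cardV n2 by simp
  have "has_perfect_matching (V - {}) (del_edges E V {})"
    by (rule hpm[of _ p]) (use p1 in simp)
  then show "has_perfect_matching V E" using delE by simp
next
  fix M assume M: "matching E M \<and> card M = 1"
  then have "card M = Suc 0" by simp
  then obtain e where Me: "M = {e}" unfolding card_1_singleton_iff by (elim exE)
  then have eE: "e \<in> E" using M unfolding matching_def by simp
  obtain x y where xy: "x \<in> V" "y \<in> V" "x \<noteq> y" "e = {x,y}" using eE by (rule edge_obt)
  have bc: "\<forall>u\<in>V. \<forall>v\<in>V. u \<noteq> v \<longrightarrow> has_perfect_matching (V - {u, v}) (del_edges E V {u, v})"
    using bicrit unfolding bicritical_def by (rule conjunct2)
  have "has_perfect_matching (V - {x, y}) (del_edges E V {x, y})"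
    using bspec[OF bspec[OF bc xy(1)] xy(2)] xy(3) by simp
  then obtain P' where P': "perfect_matching (V - {x, y}) (del_edges E V {x, y}) P'"
    unfolding has_perfect_matching_def by (elim exE)
  have P'E: "P' \<subseteq> del_edges E V {x,y}" and P'd: "\<And>e1 e2. e1\<in>P' \<Longrightarrow> e2\<in>P' \<Longrightarrow> e1 \<noteq> e2 \<Longrightarrow> e1 \<inter> e2 = {}"
    and P'U: "\<Union>P' = V - {x,y}"
    using P' unfolding perfect_matching_def matching_def by auto
  have fsub: "f \<subseteq> V - {x,y}" "f \<in> E" if "f \<in> P'" for f using that P'E unfolding del_edges_def by auto
  have fdisj: "f \<inter> e = {}" if "f \<in> P'" for f using fsub(1)[OF that] xy(4) by auto
  have "perfect_matching V E (insert e P')"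
    unfolding perfect_matching_def matching_def
  proof (intro conjI ballI impI)
    show "insert e P' \<subseteq> E" using eE fsub(2) by auto
    fix e1 e2 assume e1: "e1 \<in> insert e P'" and e2: "e2 \<in> insert e P'" and ne: "e1 \<noteq> e2"
    show "e1 \<inter> e2 = {}"
    proof (cases "e1 = e")
      case True
      then have "e2 \<in> P'" using e2 ne by auto
      then show ?thesis using fdisj True by auto
    next
      case False
      then have e1P: "e1 \<in> P'" using e1 by auto
      show ?thesis
      proof (cases "e2 = e")
        case True then show ?thesis using fdisj[OF e1P] by simp
      next
        case False then have "e2 \<in> P'" using e2 by simp
        then show ?thesis using P'd e1P ne by simp
      qed
    qed
  next
    have "\<Union> (insert e P') = e \<union> (V - {x,y})" using P'U by simp
    also have "\<dots> = V" using xy by auto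
    finally show "\<Union> (insert e P') = V" .
  qed
  then show "\<exists>P. perfect_matching V E P \<and> M \<subseteq> P" using Me by (intro exI[of _ "insert e P'"]) simp
qed

lemma brick: "brick V E" unfolding brick_def using kconn bicrit by simp

end

theorem lemma2p5:
  fixes V :: "'a set" and E :: "'a set set" and n :: nat
  assumes "in_G2n n V E"
    and "max_forcing_number V E = n - 1"
  shows "(in_Kplus n V E \<longleftrightarrow> (\<exists>I. independent_set V E I \<and> card I = n))
       \<and> (\<not> in_Kplus n V E \<longrightarrow> brick V E \<and> extendable 1 V E)"
proof -
  have sg: "simple_graph V E" and cV: "card V = 2 * n" using assms(1) unfolding in_G2n_def by auto
  obtain p where p1: "\<And>x. x \<in> V \<Longrightarrow> p x \<in> V \<and> p x \<noteq> x \<and> p (p x) = x \<and> {x, p x} \<in> E"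
   and Q: "\<And>x y. x \<in> V \<Longrightarrow> y \<in> V \<Longrightarrow> y \<noteq> x \<Longrightarrow> y \<noteq> p x \<Longrightarrow>
        ({x,y} \<in> E \<and> {p x, p y} \<in> E) \<or> ({x, p y} \<in> E \<and> {p x, y} \<in> E)"
    by (rule forcing_Q[OF assms]) blast
  interpret pg V E p n by (rule pg.intro[OF sg cV p1 Q])
  have iff: "in_Kplus n V E \<longleftrightarrow> (\<exists>I. independent_set V E I \<and> card I = n)"
  proof
    assume "in_Kplus n V E" then show "\<exists>I. independent_set V E I \<and> card I = n"
      using Kplus_indep sg by blast
  next
    assume "\<exists>I. independent_set V E I \<and> card I = n"
    then obtain I where "independent_set V E I" "card I = n" by (elim exE conjE)
    then show "in_Kplus n V E" by (rule indep_Kplus)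
  qed
  moreover have "\<not> in_Kplus n V E \<longrightarrow> brick V E \<and> extendable 1 V E"
  proof
    assume nk: "\<not> in_Kplus n V E"
    then have ni: "\<not> (\<exists>I. independent_set V E I \<and> card I = n)" using iff by simp
    interpret pg2 V E p n by (rule pg2.intro[OF pg_axioms]) (rule pg2_axioms.intro[OF ni])
    show "brick V E \<and> extendable 1 V E" using brick ext1 by simp
  qed
  ultimately show ?thesis by simp
qed

end
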